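(* Let $\beta>0$, $c\ge0$, $a=\sqrt{\tfrac{\beta}{2}}\sqrt{1+\tfrac{2c}{\beta}-\sqrt{1+\tfrac{4c}{\beta}}}$, $b=\sqrt{\tfrac{\beta}{2}}\sqrt{1+\tfrac{2c}{\beta}+\sqrt{1+\tfrac{4c}{\beta}}}$, $S=[-b,-a]\cup[a,b]$, and let $$f(z)=\frac{2}{\beta z}\sqrt{z-a}\,\sqrt{z-b}\,\sqrt{z+a}\,\sqrt{z+b},$$ each square root being the principal branch (holomorphic on $\mathbb{C}\setminus(-\infty,0]$, positive on $(0,\infty)$). Then the difference of boundary values of $f$, i.e. the distribution $[f]$ on $\mathbb{R}$ given by $([f],\varphi)=\lim_{\varepsilon\to0^+}\int_{\mathbb{R}}\varphi(x)\big(f(x+i\varepsilon)-f(x-i\varepsilon)\big)dx$ for $\varphi\in C_c^\infty(\mathbb{R})$, is $$[f]=2i\pi\,\nu_{\beta,c}+2i\pi\,\frac{2c}{\beta}\,\delta_0,$$ where $\nu_{\beta,c}$ is the probability measure with density $\frac{2}{\pi\beta}\frac{1}{|t|}\sqrt{(t^2-a^2)(b^2-t^2)}$ on $S$ and $0$ off $S$, and $\delta_0$ is the Dirac mass at $0$. *)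

theory Defs
  imports "HOL-Analysis.Analysis"
begin

definition edge_a :: "real \<Rightarrow> real \<Rightarrow> real" where
  "edge_a \<beta> c = sqrt (\<beta>/2) * sqrt (1 + 2*c/\<beta> - sqrt (1 + 4*c/\<beta>))"

definition edge_b :: "real \<Rightarrow> real \<Rightarrow> real" where
  "edge_b \<beta> c = sqrt (\<beta>/2) * sqrt (1 + 2*c/\<beta> + sqrt (1 + 4*c/\<beta>))"

definition supp_S :: "real \<Rightarrow> real \<Rightarrow> real set" where
  "supp_S \<beta> c = {-edge_b \<beta> c..-edge_a \<beta> c} \<union> {edge_a \<beta> c..edge_b \<beta> c}"

definition fbc :: "real \<Rightarrow> real \<Rightarrow> complex \<Rightarrow> complex" where
  "fbc \<beta> c z = (let a = complex_of_real (edge_a \<beta> c); b = complex_of_real (edge_b \<beta> c) in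
     2 / (complex_of_real \<beta> * z) * csqrt (z - a) * csqrt (z - b) * csqrt (z + a) * csqrt (z + b))"

definition nu_density :: "real \<Rightarrow> real \<Rightarrow> real \<Rightarrow> real" where
  "nu_density \<beta> c t = (if t \<in> supp_S \<beta> c then
      2 / (pi * \<beta>) * (1 / \<bar>t\<bar>) * sqrt ((t^2 - (edge_a \<beta> c)^2) * ((edge_b \<beta> c)^2 - t^2))
    else 0)"

definition nu :: "real \<Rightarrow> real \<Rightarrow> real measure" where
  "nu \<beta> c = density lborel (\<lambda>t. ennreal (nu_density \<beta> c t))"

definition smooth_real :: "(real \<Rightarrow> real) \<Rightarrow> bool" where
  "smooth_real \<phi> \<longleftrightarrow> (\<forall>k. ((deriv ^^ k) \<phi>) differentiable_on UNIV)"

definition test_function :: "(real \<Rightarrow> real) \<Rightarrow> bool" where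
  "test_function \<phi> \<longleftrightarrow> smooth_real \<phi> \<and> compact (closure {x. \<phi> x \<noteq> 0})"

end

theory Submission
  imports Defs "HOL-Probability.Sinc_Integral"
begin


definition Lp :: "real \<Rightarrow> complex" where
  "Lp t = (if t > 0 then complex_of_real (sqrt t) else \<i> * complex_of_real (sqrt (-t)))"
definition Lm :: "real \<Rightarrow> complex" where
  "Lm t = (if t > 0 then complex_of_real (sqrt t) else - \<i> * complex_of_real (sqrt (-t)))"

lemma neg_lim: "((\<lambda>e::real. -e) \<longlongrightarrow> 0) (at_right 0)"
  using tendsto_minus[OF tendsto_ident_at[of "0::real" "{0<..}"]] by simp

lemma csqrt_lim_pos:
  assumes "t > 0" and that: "(g \<longlongrightarrow> 0) (at_right 0)"
  shows "((\<lambda>e. csqrt (Complex t (g e))) \<longlongrightarrow> complex_of_real (sqrt t)) (at_right 0)"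
proof -
  have "((\<lambda>e. Complex t (g e)) \<longlongrightarrow> Complex t 0) (at_right 0)"
    using that by (intro tendsto_Complex) auto
  moreover have "isCont csqrt (Complex t 0)"
    using assms by (intro continuous_at_csqrt) (auto simp: complex_nonpos_Reals_iff)
  ultimately have "((\<lambda>e. csqrt (Complex t (g e))) \<longlongrightarrow> csqrt (Complex t 0)) (at_right 0)"
    using isCont_tendsto_compose by blast
  moreover have "csqrt (Complex t 0) = complex_of_real (sqrt t)"
    using assms by (simp add: Complex_eq csqrt_of_real)
  ultimately show ?thesis by simp
qed

lemma csqrt_lim_p:
  assumes "t \<noteq> 0"
  shows "((\<lambda>e. csqrt (Complex t e)) \<longlongrightarrow> Lp t) (at_right 0)"
proof (cases "t > 0")
  case True
  then show ?thesis using csqrt_lim_pos[of t "\<lambda>e. e"] by (simp add: Lp_def)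
next
  case False
  then have t: "-t > 0" using assms by simp
  have "\<forall>\<^sub>F e in at_right 0. csqrt (Complex t e) = \<i> * csqrt (Complex (-t) (-e))"
  proof -
    have "\<forall>\<^sub>F e in at_right (0::real). e > 0" by (simp add: eventually_at_right_less)
    then show ?thesis
    proof eventually_elim
      case (elim e)
      have "Complex t e = - Complex (-t) (-e)" by (simp add: complex_eq_iff)
      then show ?case using elim by (simp del: csqrt.simps)
    qed
  qed
  moreover have "((\<lambda>e. \<i> * csqrt (Complex (-t) (-e))) \<longlongrightarrow> \<i> * complex_of_real (sqrt (-t))) (at_right 0)"
    using csqrt_lim_pos[OF t neg_lim] by (intro tendsto_mult tendsto_const) auto
  ultimately show ?thesis using False
    by (simp add: Lp_def tendsto_cong)
qed

lemma csqrt_lim_m: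
  assumes "t \<noteq> 0"
  shows "((\<lambda>e. csqrt (Complex t (-e))) \<longlongrightarrow> Lm t) (at_right 0)"
proof (cases "t > 0")
  case True
  then show ?thesis using csqrt_lim_pos[OF _ neg_lim, of t] by (simp add: Lm_def)
next
  case False
  then have t: "-t > 0" using assms by simp
  have "\<forall>\<^sub>F e in at_right 0. csqrt (Complex t (-e)) = - \<i> * csqrt (Complex (-t) e)"
  proof -
    have "\<forall>\<^sub>F e in at_right (0::real). e > 0" by (simp add: eventually_at_right_less)
    then show ?thesis
    proof eventually_elim
      case (elim e)
      have "Complex (-t) e = - Complex t (-e)" by (simp add: complex_eq_iff)
      then have "csqrt (Complex (-t) e) = \<i> * csqrt (Complex t (-e))" using elim by (simp del: csqrt.simps)
      then show ?case by simp
    qed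
  qed
  moreover have "((\<lambda>e. - \<i> * csqrt (Complex (-t) e)) \<longlongrightarrow> - \<i> * complex_of_real (sqrt (-t))) (at_right 0)"
    using csqrt_lim_pos[OF t, of "\<lambda>e. e"] by (intro tendsto_mult tendsto_const) (auto intro: tendsto_eq_intros)
  ultimately show ?thesis using False
    by (simp add: Lm_def tendsto_cong)
qed



definition Q :: "real \<Rightarrow> complex \<Rightarrow> complex" where
  "Q a z = csqrt (complex_of_real a - z) * csqrt (z + complex_of_real a)"

lemma sqrt_pair:
  assumes "Im z \<noteq> 0"
  shows "csqrt (z - complex_of_real a) * csqrt (z - complex_of_real b)
       = - (csqrt (complex_of_real a - z) * csqrt (complex_of_real b - z))"
proof (cases "Im z > 0")
  case True
  have "csqrt (z - of_real a) = \<i> * csqrt (of_real a - z)"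
    using csqrt_minus[of "of_real a - z"] True by simp
  moreover have "csqrt (z - of_real b) = \<i> * csqrt (of_real b - z)"
    using csqrt_minus[of "of_real b - z"] True by simp
  ultimately show ?thesis by (simp add: algebra_simps)
next
  case False
  then have F: "Im z < 0" using assms by simp
  have "csqrt (of_real a - z) = \<i> * csqrt (z - of_real a)"
    using csqrt_minus[of "z - of_real a"] F by simp
  moreover have "csqrt (of_real b - z) = \<i> * csqrt (z - of_real b)"
    using csqrt_minus[of "z - of_real b"] F by simp
  ultimately show ?thesis by (simp add: algebra_simps)
qed

lemma fbc_eq:
  assumes "Im z \<noteq> 0"
  shows "fbc \<beta> c z = - (2 / complex_of_real \<beta>) *
     (Q (edge_a \<beta> c) z * Q (edge_b \<beta> c) z) / z"
proof -
  have "fbc \<beta> c z = 2 / (complex_of_real \<beta> * z) *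
     (csqrt (z - of_real (edge_a \<beta> c)) * csqrt (z - of_real (edge_b \<beta> c))) *
     csqrt (z + of_real (edge_a \<beta> c)) * csqrt (z + of_real (edge_b \<beta> c))"
    by (simp add: fbc_def Let_def mult.assoc)
  also have "\<dots> = 2 / (complex_of_real \<beta> * z) *
     (- (csqrt (of_real (edge_a \<beta> c) - z) * csqrt (of_real (edge_b \<beta> c) - z))) *
     csqrt (z + of_real (edge_a \<beta> c)) * csqrt (z + of_real (edge_b \<beta> c))"
    using sqrt_pair[OF assms] by simp
  also have "\<dots> = - (2 / complex_of_real \<beta>) *
     (Q (edge_a \<beta> c) z * Q (edge_b \<beta> c) z) / z"
    by (simp add: Q_def field_simps)
  finally show ?thesis .
qed

lemma Im_csqrt_sgn: "Im (csqrt w) = (if Im w = 0 then 1 else sgn (Im w)) * sqrt ((cmod w - Re w) / 2)"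
  by simp

lemma Q_Re_nonneg:
  assumes "Im z \<noteq> 0"
  shows "Re (Q a z) \<ge> 0"
proof -
  define u where "u = csqrt (complex_of_real a - z)"
  define v where "v = csqrt (z + complex_of_real a)"
  have "Im u * Im v \<le> 0"
  proof -
    have "Im u = sgn (- Im z) * sqrt ((cmod (complex_of_real a - z) - Re (complex_of_real a - z)) / 2)"
      using assms unfolding u_def by (subst Im_csqrt_sgn) simp
    moreover have "Im v = sgn (Im z) * sqrt ((cmod (z + complex_of_real a) - Re (z + complex_of_real a)) / 2)"
      using assms unfolding v_def by (subst Im_csqrt_sgn) simp
    moreover have "0 \<le> sqrt ((cmod (complex_of_real a - z) - Re (complex_of_real a - z)) / 2)"
      using complex_Re_le_cmod[of "complex_of_real a - z"] by simp
    moreover have "0 \<le> sqrt ((cmod (z + complex_of_real a) - Re (z + complex_of_real a)) / 2)"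
      using complex_Re_le_cmod[of "z + complex_of_real a"] by simp
    ultimately show ?thesis using assms
      by (cases "Im z > 0") (auto simp: mult_le_0_iff)
  qed
  moreover have "Re u \<ge> 0" "Re v \<ge> 0" unfolding u_def v_def by (rule Re_csqrt)+
  ultimately have "0 \<le> Re u * Re v - Im u * Im v"
    by (metis diff_ge_0_iff_ge mult_nonneg_nonneg order_trans)
  then show ?thesis unfolding Q_def u_def[symmetric] v_def[symmetric] by simp
qed

lemma Q_sq: "(Q a z)^2 = (complex_of_real a)^2 - z^2"
  unfolding Q_def power_mult_distrib power2_csqrt by (simp add: algebra_simps power2_eq_square)

lemma Q_bound:
  assumes "a \<ge> 0" "Im z \<noteq> 0"
  shows "cmod (Q a z - complex_of_real a) \<le> cmod z"
proof -
  define q where "q = Q a z"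
  have re: "Re q \<ge> 0" using Q_Re_nonneg[OF assms(2)] unfolding q_def .
  have e1: "(cmod (q - of_real a))^2 = (Re q - a)^2 + (Im q)^2" by (simp add: cmod_power2)
  have e2: "(cmod (q + of_real a))^2 = (Re q + a)^2 + (Im q)^2" by (simp add: cmod_power2)
  have "(cmod (q - of_real a))^2 \<le> (cmod (q + of_real a))^2"
    unfolding e1 e2 using re assms(1) by (simp add: power2_eq_square algebra_simps)
  then have le: "cmod (q - of_real a) \<le> cmod (q + of_real a)"
    by (simp add: power2_le_iff_abs_le)
  have "cmod (q - of_real a) * cmod (q + of_real a) = cmod (q^2 - (of_real a)^2)"
    by (simp add: power2_eq_square norm_mult[symmetric] algebra_simps)
  also have "\<dots> = (cmod z)^2" using Q_sq[of a z] by (simp add: q_def norm_power)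
  finally have eq: "cmod (q - of_real a) * cmod (q + of_real a) = (cmod z)^2" .
  have "cmod (q - of_real a) * cmod (q - of_real a) \<le> cmod (q - of_real a) * cmod (q + of_real a)"
    by (rule mult_left_mono[OF le]) simp
  then have "cmod (q - of_real a) * cmod (q - of_real a) \<le> (cmod z)^2" using eq by simp
  then have "(cmod (q - of_real a))^2 \<le> (cmod z)^2" by (simp add: power2_eq_square)
  then show ?thesis unfolding q_def by (simp add: power2_le_iff_abs_le)
qed

lemma Q_norm:
  assumes "b \<ge> 0"
  shows "cmod (Q b z) \<le> b + cmod z"
proof -
  have "cmod (Q b z) = sqrt (cmod (of_real b - z)) * sqrt (cmod (z + of_real b))"
    by (simp add: Q_def norm_mult)
  also have "\<dots> \<le> (cmod (of_real b - z) + cmod (z + of_real b)) / 2"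
    using arith_geo_mean_sqrt[of "cmod (of_real b - z)" "cmod (z + of_real b)"] by (simp add: real_sqrt_mult)
  also have "\<dots> \<le> (b + cmod z + (cmod z + b)) / 2"
    using norm_triangle_ineq4[of "of_real b" z] norm_triangle_ineq[of z "of_real b"] assms
    by (intro divide_right_mono add_mono) auto
  finally show ?thesis by simp
qed



lemma edge_facts:
  assumes "\<beta> > 0" "c \<ge> 0"
  shows "0 \<le> edge_a \<beta> c" "edge_a \<beta> c \<le> edge_b \<beta> c" "edge_a \<beta> c * edge_b \<beta> c = c"
proof -
  define s where "s = sqrt (1 + 4*c/\<beta>)"
  define X where "X = 1 + 2*c/\<beta>"
  have s0: "s \<ge> 0" unfolding s_def using assms by simp
  have ss: "s^2 = 1 + 4*c/\<beta>" unfolding s_def using assms by simp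
  have XX: "X^2 - s^2 = (2*c/\<beta>)^2" unfolding X_def ss using assms by (simp add: power2_eq_square field_simps)
  have Xs: "X - s \<ge> 0"
  proof -
    have "s^2 \<le> X^2" using XX by (metis diff_ge_0_iff_ge zero_le_power2)
    moreover have "X \<ge> 0" unfolding X_def using assms by simp
    ultimately show ?thesis using s0 by (simp add: power2_le_iff_abs_le)
  qed
  have ea: "edge_a \<beta> c = sqrt (\<beta>/2) * sqrt (X - s)" unfolding edge_a_def X_def s_def ..
  have eb: "edge_b \<beta> c = sqrt (\<beta>/2) * sqrt (X + s)" unfolding edge_b_def X_def s_def ..
  show "0 \<le> edge_a \<beta> c" unfolding ea using Xs assms by simp
  show "edge_a \<beta> c \<le> edge_b \<beta> c" unfolding ea eb using s0 assms
    by (intro mult_left_mono) auto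
  have "edge_a \<beta> c * edge_b \<beta> c = (sqrt (\<beta>/2))^2 * sqrt ((X - s) * (X + s))"
    unfolding ea eb real_sqrt_mult power2_eq_square by (simp add: algebra_simps)
  also have "(X - s) * (X + s) = (2*c/\<beta>)^2" using XX by (simp add: algebra_simps power2_eq_square)
  also have "(sqrt (\<beta>/2))^2 * sqrt ((2*c/\<beta>)^2) = c"
  proof -
    have "(sqrt (\<beta>/2))^2 = \<beta>/2" using assms by simp
    moreover have "sqrt ((2*c/\<beta>)^2) = 2*c/\<beta>" using assms by simp
    ultimately show ?thesis using assms by simp
  qed
  finally show "edge_a \<beta> c * edge_b \<beta> c = c" .
qed

lemma E_bound:
  assumes "0 \<le> a" "0 \<le> b" "Im z \<noteq> 0"
  shows "cmod ((Q a z * Q b z - complex_of_real (a*b)) / z) \<le> a + b + cmod z"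
proof -
  have z0: "z \<noteq> 0" using assms by auto
  have "Q a z * Q b z - complex_of_real (a*b) =
        (Q a z - of_real a) * Q b z + of_real a * (Q b z - of_real b)"
    by (simp add: algebra_simps)
  then have "cmod (Q a z * Q b z - complex_of_real (a*b)) \<le>
        cmod (Q a z - of_real a) * cmod (Q b z) + a * cmod (Q b z - of_real b)"
    using norm_triangle_ineq[of "(Q a z - of_real a) * Q b z" "of_real a * (Q b z - of_real b)"] assms
    by (simp add: norm_mult)
  also have "\<dots> \<le> cmod z * (b + cmod z) + a * cmod z"
    using Q_bound[OF assms(1,3)] Q_bound[OF assms(2,3)] Q_norm[OF assms(2), of z] assms
    by (intro add_mono mult_mono mult_left_mono) auto
  also have "\<dots> = cmod z * (a + b + cmod z)" by (simp add: algebra_simps)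
  finally show ?thesis using z0 by (simp add: norm_divide divide_le_eq mult.commute)
qed

lemma Q_lim_p:
  assumes "x \<noteq> a" "x \<noteq> -a"
  shows "((\<lambda>e. Q a (Complex x e)) \<longlongrightarrow> Lm (a - x) * Lp (x + a)) (at_right 0)"
proof -
  have eq: "(\<lambda>e. Q a (Complex x e)) = (\<lambda>e. csqrt (Complex (a - x) (-e)) * csqrt (Complex (x + a) e))"
  proof (rule ext)
    fix e
    have "complex_of_real a - Complex x e = Complex (a - x) (-e)" "Complex x e + complex_of_real a = Complex (x + a) e"
      by (simp_all add: complex_eq_iff)
    then show "Q a (Complex x e) = csqrt (Complex (a - x) (-e)) * csqrt (Complex (x + a) e)"
      unfolding Q_def by simp
  qed
  show ?thesis unfolding eq using assms
    by (intro tendsto_mult csqrt_lim_p csqrt_lim_m) auto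
qed

lemma Q_lim_m:
  assumes "x \<noteq> a" "x \<noteq> -a"
  shows "((\<lambda>e. Q a (Complex x (-e))) \<longlongrightarrow> Lp (a - x) * Lm (x + a)) (at_right 0)"
proof -
  have eq: "(\<lambda>e. Q a (Complex x (-e))) = (\<lambda>e. csqrt (Complex (a - x) e) * csqrt (Complex (x + a) (-e)))"
  proof (rule ext)
    fix e
    have "complex_of_real a - Complex x (-e) = Complex (a - x) e" "Complex x (-e) + complex_of_real a = Complex (x + a) (-e)"
      by (simp_all add: complex_eq_iff)
    then show "Q a (Complex x (-e)) = csqrt (Complex (a - x) e) * csqrt (Complex (x + a) (-e))"
      unfolding Q_def by simp
  qed
  show ?thesis unfolding eq using assms
    by (intro tendsto_mult csqrt_lim_p csqrt_lim_m) auto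
qed

definition Pp :: "real \<Rightarrow> real \<Rightarrow> real \<Rightarrow> complex" where
  "Pp a b x = Lm (a - x) * Lp (x + a) * (Lm (b - x) * Lp (x + b))"
definition Pm :: "real \<Rightarrow> real \<Rightarrow> real \<Rightarrow> complex" where
  "Pm a b x = Lp (a - x) * Lm (x + a) * (Lp (b - x) * Lm (x + b))"

lemma jump_val:
  assumes "0 \<le> a" "a \<le> b" "x \<notin> {0, a, -a, b, -b}"
  shows "(Pp a b x - Pm a b x) / complex_of_real x =
     (if a < \<bar>x\<bar> \<and> \<bar>x\<bar> < b then -2 * \<i> * complex_of_real (sqrt ((x^2 - a^2) * (b^2 - x^2)) / \<bar>x\<bar>) else 0)"
proof -
  consider "x > b" | "a < x \<and> x < b" | "0 < x \<and> x < a" | "-a < x \<and> x < 0" | "-b < x \<and> x < -a" | "x < -b"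
  proof -
    have "x \<noteq> 0" "x \<noteq> a" "x \<noteq> -a" "x \<noteq> b" "x \<noteq> -b" using assms(3) by auto
    then show "(b < x \<Longrightarrow> thesis) \<Longrightarrow> (a < x \<and> x < b \<Longrightarrow> thesis) \<Longrightarrow> (0 < x \<and> x < a \<Longrightarrow> thesis) \<Longrightarrow>
      (- a < x \<and> x < 0 \<Longrightarrow> thesis) \<Longrightarrow> (- b < x \<and> x < - a \<Longrightarrow> thesis) \<Longrightarrow> (x < - b \<Longrightarrow> thesis) \<Longrightarrow> thesis"
      using assms(1,2) by smt
  qed
  then show ?thesis
  proof cases
    case 1 then show ?thesis using assms by (simp add: Pp_def Pm_def Lp_def Lm_def algebra_simps)
  next
    case 2
    have sq: "sqrt (x - a) * sqrt (x + a) * sqrt (b - x) * sqrt (x + b) = sqrt ((x^2 - a^2) * (b^2 - x^2))"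
      by (simp add: real_sqrt_mult[symmetric] power2_eq_square algebra_simps)
    have "Pp a b x - Pm a b x = -2 * \<i> * of_real (sqrt (x - a) * sqrt (x + a) * sqrt (b - x) * sqrt (x + b))"
      using 2 assms by (simp add: Pp_def Pm_def Lp_def Lm_def algebra_simps)
    then have D: "Pp a b x - Pm a b x = -2 * \<i> * of_real (sqrt ((x^2 - a^2) * (b^2 - x^2)))"
      unfolding sq .
    show ?thesis using 2 assms by (simp add: D)
  next
    case 3 then show ?thesis using assms by (simp add: Pp_def Pm_def Lp_def Lm_def algebra_simps)
  next
    case 4 then show ?thesis using assms by (simp add: Pp_def Pm_def Lp_def Lm_def algebra_simps)
  next
    case 5
    have sq: "sqrt (a - x) * sqrt (-x - a) * sqrt (b - x) * sqrt (x + b) = sqrt ((x^2 - a^2) * (b^2 - x^2))"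
      by (simp add: real_sqrt_mult[symmetric] power2_eq_square algebra_simps)
    have "Pp a b x - Pm a b x = 2 * \<i> * of_real (sqrt (a - x) * sqrt (-x - a) * sqrt (b - x) * sqrt (x + b))"
      using 5 assms by (simp add: Pp_def Pm_def Lp_def Lm_def algebra_simps)
    then have D: "Pp a b x - Pm a b x = 2 * \<i> * of_real (sqrt ((x^2 - a^2) * (b^2 - x^2)))"
      unfolding sq .
    show ?thesis using 5 assms by (simp add: D)
  next
    case 6 then show ?thesis using assms by (simp add: Pp_def Pm_def Lp_def Lm_def algebra_simps)
  qed
qed



lemma DCT_at_right:
  fixes s :: "real \<Rightarrow> real \<Rightarrow> 'b::{banach, second_countable_topology}" and w :: "real \<Rightarrow> real"
  assumes f: "f \<in> borel_measurable lborel" and s: "\<And>e. s e \<in> borel_measurable lborel"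
    and w: "integrable lborel w"
    and lim: "AE x in lborel. ((\<lambda>e. s e x) \<longlongrightarrow> f x) (at_right 0)"
    and bound: "\<forall>\<^sub>F e in at_right 0. AE x in lborel. norm (s e x) \<le> w x"
  shows "((\<lambda>e. integral\<^sup>L lborel (s e)) \<longlongrightarrow> integral\<^sup>L lborel f) (at_right 0)"
  unfolding filterlim_at_right_to_top
proof (rule integral_dominated_convergence_at_top[where s="\<lambda>t. s (inverse t)" and w=w])
  show "AE x in lborel. ((\<lambda>i. s (inverse i) x) \<longlongrightarrow> f x) at_top"
    using lim by eventually_elim (simp add: filterlim_at_right_to_top)
  show "\<forall>\<^sub>F i in at_top. AE x in lborel. norm (s (inverse i) x) \<le> w x"
    using bound by (simp add: eventually_at_right_to_top)
qed (use f s w in auto)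

lemma test_facts:
  assumes "test_function \<phi>"
  shows "continuous_on UNIV \<phi>" "\<exists>R>0. \<forall>x. \<bar>x\<bar> > R \<longrightarrow> \<phi> x = 0" "\<exists>M. \<forall>x. \<bar>\<phi> x\<bar> \<le> M"
proof -
  have "\<forall>k. ((deriv ^^ k) \<phi>) differentiable_on UNIV" using assms by (simp add: test_function_def smooth_real_def)
  then have "((deriv ^^ 0) \<phi>) differentiable_on UNIV" by blast
  then show cont: "continuous_on UNIV \<phi>" by (simp add: differentiable_imp_continuous_on)
  have "bounded (closure {x. \<phi> x \<noteq> 0})" using assms by (simp add: test_function_def compact_imp_bounded)
  then obtain B where B: "\<And>x. x \<in> closure {x. \<phi> x \<noteq> 0} \<Longrightarrow> \<bar>x\<bar> \<le> B" by (auto simp: bounded_iff)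
  have supp: "\<forall>x. \<bar>x\<bar> > max B 1 \<longrightarrow> \<phi> x = 0"
    using B closure_subset by force
  then show "\<exists>R>0. \<forall>x. \<bar>x\<bar> > R \<longrightarrow> \<phi> x = 0" by (intro exI[of _ "max B 1"]) auto
  have "compact (\<phi> ` {-max B 1..max B 1})"
    by (rule compact_continuous_image) (auto intro: continuous_on_subset[OF cont])
  then obtain M where M: "\<And>y. y \<in> \<phi> ` {-max B 1..max B 1} \<Longrightarrow> \<bar>y\<bar> \<le> M"
    using compact_imp_bounded bounded_iff real_norm_def by metis
  show "\<exists>M. \<forall>x. \<bar>\<phi> x\<bar> \<le> M"
  proof (intro exI[of _ "max M 0"] allI)
    fix x
    show "\<bar>\<phi> x\<bar> \<le> max M 0"
    proof (cases "\<bar>x\<bar> > max B 1")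
      case True then show ?thesis using supp by simp
    next
      case False then have "x \<in> {-max B 1..max B 1}" by auto
      then show ?thesis using M by force
    qed
  qed
qed

lemma nu_density_measurable: "nu_density \<beta> c \<in> borel_measurable lborel"
proof -
  have "closed (supp_S \<beta> c)" unfolding supp_S_def by (intro closed_Un closed_real_atLeastAtMost)
  then have "supp_S \<beta> c \<in> sets borel" by simp
  then show ?thesis unfolding nu_density_def by measurable
qed

lemma nu_density_nonneg:
  assumes "\<beta> > 0" "c \<ge> 0"
  shows "nu_density \<beta> c x \<ge> 0"
proof (cases "x \<in> supp_S \<beta> c")
  case True
  have a0: "0 \<le> edge_a \<beta> c" using edge_facts[OF assms] by simp
  from True a0 have "edge_a \<beta> c \<le> \<bar>x\<bar> \<and> \<bar>x\<bar> \<le> edge_b \<beta> c" unfolding supp_S_def by auto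
  then have "(edge_a \<beta> c)^2 \<le> x^2 \<and> x^2 \<le> (edge_b \<beta> c)^2"
    using a0 by (metis abs_le_square_iff abs_of_nonneg order.trans)
  then have "0 \<le> (x^2 - (edge_a \<beta> c)^2) * ((edge_b \<beta> c)^2 - x^2)" by simp
  then show ?thesis using True assms by (simp add: nu_density_def)
qed (simp add: nu_density_def)



lemma inv_sq_int: "integrable lborel (\<lambda>x::real. inverse (1 + x^2))"
  "integral\<^sup>L lborel (\<lambda>x::real. inverse (1 + x^2)) = pi"
proof -
  have U: "einterval (-\<infinity>) \<infinity> = (UNIV :: real set)" by (auto simp: einterval_iff)
  show "integrable lborel (\<lambda>x::real. inverse (1 + x^2))"
    using integrable_inverse_1_plus_square unfolding U set_integrable_def by simp
  show "integral\<^sup>L lborel (\<lambda>x::real. inverse (1 + x^2)) = pi"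
    using LBINT_inverse_1_plus_square unfolding interval_lebesgue_integral_def U set_lebesgue_integral_def
    by simp
qed

lemma poisson:
  fixes \<phi> :: "real \<Rightarrow> real"
  assumes cont: "continuous_on UNIV \<phi>" and M: "\<And>x. \<bar>\<phi> x\<bar> \<le> M"
  shows "((\<lambda>e. integral\<^sup>L lborel (\<lambda>x. \<phi> x * (e / (x^2 + e^2)))) \<longlongrightarrow> pi * \<phi> 0) (at_right 0)"
proof -
  have meas: "\<phi> \<in> borel_measurable lborel" using cont by (simp add: borel_measurable_continuous_onI)
  have ev: "\<forall>\<^sub>F e in at_right 0. integral\<^sup>L lborel (\<lambda>t. \<phi> (e * t) * inverse (1 + t^2))
      = integral\<^sup>L lborel (\<lambda>x. \<phi> x * (e / (x^2 + e^2)))"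
  proof -
    have "\<forall>\<^sub>F e in at_right (0::real). e > 0" by (simp add: eventually_at_right_less)
    then show ?thesis
    proof eventually_elim
      case (elim e)
      have "integral\<^sup>L lborel (\<lambda>x. \<phi> x * (e / (x^2 + e^2)))
          = \<bar>e\<bar> *\<^sub>R integral\<^sup>L lborel (\<lambda>x. \<phi> (0 + e * x) * (e / ((0 + e * x)^2 + e^2)))"
        using elim lborel_integral_real_affine[of e "\<lambda>x. \<phi> x * (e / (x^2 + e^2))" 0] by simp
      also have "\<dots> = integral\<^sup>L lborel (\<lambda>t. \<phi> (e * t) * inverse (1 + t^2))"
      proof -
        have "\<And>t. e * (\<phi> (e * t) * (e / ((e * t)^2 + e^2))) = \<phi> (e * t) * inverse (1 + t^2)"
        proof -
          fix t
          have d: "(e * t)^2 + e^2 = e^2 * (1 + t^2)" by (simp add: algebra_simps power_mult_distrib)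
          have p: "1 + t^2 > 0" by (simp add: add_pos_nonneg)
          show "e * (\<phi> (e * t) * (e / ((e * t)^2 + e^2))) = \<phi> (e * t) * inverse (1 + t^2)"
          proof -
            have "e * (\<phi> (e * t) * (e / (e^2 * (1 + t^2)))) = \<phi> (e * t) * ((e * e) / (e * e * (1 + t^2)))"
              by (simp add: power2_eq_square)
            also have "(e * e) / (e * e * (1 + t^2)) = inverse (1 + t^2)"
              using elim nonzero_divide_mult_cancel_left[of "e * e" "1 + t^2"] by (simp add: divide_inverse)
            finally show ?thesis unfolding d .
          qed
        qed
        then show ?thesis using elim by (simp flip: integral_mult_right_zero)
      qed
      finally show ?case by simp
    qed
  qed
  have "((\<lambda>e. integral\<^sup>L lborel (\<lambda>t. \<phi> (e * t) * inverse (1 + t^2))) \<longlongrightarrow>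
      integral\<^sup>L lborel (\<lambda>t. \<phi> 0 * inverse (1 + t^2))) (at_right 0)"
  proof (rule DCT_at_right[where w="\<lambda>t. M * inverse (1 + t^2)"])
    show "(\<lambda>t. \<phi> 0 * inverse (1 + t^2)) \<in> borel_measurable lborel" by measurable
    show "(\<lambda>t. \<phi> (e * t) * inverse (1 + t^2)) \<in> borel_measurable lborel" for e
      using meas by measurable
    show "integrable lborel (\<lambda>t. M * inverse (1 + t^2))" using inv_sq_int(1) by simp
    show "AE t in lborel. ((\<lambda>e. \<phi> (e * t) * inverse (1 + t^2)) \<longlongrightarrow> \<phi> 0 * inverse (1 + t^2)) (at_right 0)"
    proof (intro AE_I2 tendsto_mult tendsto_const)
      fix t :: real
      have "((\<lambda>e. e * t) \<longlongrightarrow> 0 * t) (at_right 0)" by (auto intro!: tendsto_eq_intros)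
      then show "((\<lambda>e. \<phi> (e * t)) \<longlongrightarrow> \<phi> 0) (at_right 0)"
        using cont continuous_on_tendsto_compose[of UNIV \<phi> "\<lambda>e. e * t"] by auto
    qed
    show "\<forall>\<^sub>F e in at_right 0. AE t in lborel. norm (\<phi> (e * t) * inverse (1 + t^2)) \<le> M * inverse (1 + t^2)"
      using M by (intro always_eventually allI AE_I2) (simp add: abs_mult mult_right_mono)
  qed
  moreover have "integral\<^sup>L lborel (\<lambda>t. \<phi> 0 * inverse (1 + t^2)) = pi * \<phi> 0"
    using inv_sq_int(2) by simp
  ultimately have "((\<lambda>e. integral\<^sup>L lborel (\<lambda>t. \<phi> (e * t) * inverse (1 + t^2))) \<longlongrightarrow> pi * \<phi> 0) (at_right 0)"
    by (simp only:)
  from this show ?thesis by (rule tendsto_cong[OF ev, THEN iffD1])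
qed



lemma csqrt_measurable[measurable]: "csqrt \<in> borel_measurable borel"
proof -
  have eq: "csqrt = (\<lambda>z. complex_of_real (sqrt ((cmod z + Re z) / 2)) + \<i> * complex_of_real
     ((if Im z = 0 then 1 else sgn (Im z)) * sqrt ((cmod z - Re z) / 2)))"
    by (rule ext) (simp add: complex_eq_iff)
  show ?thesis unfolding eq by measurable
qed

lemma Q_measurable[measurable]: "Q a \<in> borel_measurable borel"
  unfolding Q_def by measurable

lemma sB_meas:
  assumes [measurable]: "\<phi> \<in> borel_measurable borel"
  shows "(\<lambda>x. complex_of_real (\<phi> x) *
      ((Q a (Complex x e) * Q b (Complex x e) - complex_of_real (a*b)) / Complex x e -
       (Q a (Complex x (-e)) * Q b (Complex x (-e)) - complex_of_real (a*b)) / Complex x (-e)))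
     \<in> borel_measurable lborel"
  unfolding Complex_eq by measurable



lemma inv_diff:
  assumes "e \<noteq> 0"
  shows "1 / Complex x e - 1 / Complex x (-e) = - 2 * \<i> * complex_of_real (e / (x^2 + e^2))"
proof -
  have p: "x^2 + e^2 > 0" using assms by (simp add: add_nonneg_pos)
  have n1: "Complex x e \<noteq> 0" "Complex x (-e) \<noteq> 0" using assms by (auto simp: complex_eq_iff)
  have "Complex x e * Complex x (-e) = complex_of_real (x^2 + e^2)"
    by (simp add: complex_eq_iff power2_eq_square)
  moreover have "Complex x (-e) - Complex x e = - 2 * \<i> * complex_of_real e"
    by (simp add: complex_eq_iff)
  ultimately show ?thesis using n1 p
    by (simp add: divide_simps)
qed

lemma fbc_split:
  assumes "\<beta> > 0" "c \<ge> 0" "Im z \<noteq> 0"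
  shows "fbc \<beta> c z = - complex_of_real (2/\<beta>) * (complex_of_real c / z +
     (Q (edge_a \<beta> c) z * Q (edge_b \<beta> c) z - complex_of_real (edge_a \<beta> c * edge_b \<beta> c)) / z)"
proof -
  have z: "z \<noteq> 0" using assms by auto
  have c: "edge_a \<beta> c * edge_b \<beta> c = c" using edge_facts[OF assms(1,2)] by simp
  show ?thesis unfolding fbc_eq[OF assms(3)] c using z
    by (simp add: field_simps)
qed


theorem proposition4p3:
  fixes \<beta> c :: real and \<phi> :: "real \<Rightarrow> real"
  assumes "\<beta> > 0" and "c \<ge> 0" and "test_function \<phi>"
  shows "((\<lambda>\<epsilon>. integral\<^sup>L lborel
             (\<lambda>x. complex_of_real (\<phi> x) *
                  (fbc \<beta> c (Complex x \<epsilon>) - fbc \<beta> c (Complex x (-\<epsilon>)))))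
          \<longlongrightarrow> 2 * \<i> * pi * complex_of_real (integral\<^sup>L (nu \<beta> c) \<phi>)
              + 2 * \<i> * pi * complex_of_real (2 * c / \<beta>) * complex_of_real (\<phi> 0))
         (at_right 0)"
proof -
  define a where "a = edge_a \<beta> c"
  define b where "b = edge_b \<beta> c"
  have a0: "0 \<le> a" and ab: "a \<le> b" and abc: "a * b = c"
    using edge_facts[OF assms(1,2)] unfolding a_def b_def by auto
  have b0: "0 \<le> b" using a0 ab by simp
  have cont: "continuous_on UNIV \<phi>" using test_facts[OF assms(3)] by simp
  obtain R where R0: "R > 0" and R: "\<And>x. \<bar>x\<bar> > R \<Longrightarrow> \<phi> x = 0"
    using test_facts(2)[OF assms(3)] by blast
  obtain M where M: "\<And>x. \<bar>\<phi> x\<bar> \<le> M" using test_facts(3)[OF assms(3)] by blast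
  have M0: "M \<ge> 0" using M[of 0] by simp
  have meas[measurable]: "\<phi> \<in> borel_measurable borel" using cont by (simp add: borel_measurable_continuous_onI)
  define E where "E z = (Q a z * Q b z - complex_of_real (a*b)) / z" for z
  define sB where "sB e x = complex_of_real (\<phi> x) * (E (Complex x e) - E (Complex x (-e)))" for e x
  define f where "f x = complex_of_real (\<phi> x * nu_density \<beta> c x) * (- (\<i> * pi * \<beta>))" for x
  define w where "w x = 2 * M * (a + b + R + 1) * indicator {-R..R} x" for x :: real
  have sB_meas: "sB e \<in> borel_measurable lborel" for e
    unfolding sB_def E_def using sB_meas[OF meas, of a e b] .
  have f_meas: "f \<in> borel_measurable lborel"
    unfolding f_def using nu_density_measurable[of \<beta> c] by measurable
  have w_int: "integrable lborel w"
    unfolding w_def by (intro integrable_mult_right integrable_real_indicator) (auto simp: emeasure_lborel_Icc_eq)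
  have w0: "w x \<ge> 0" for x unfolding w_def using M0 a0 b0 R0 by simp
  have E_bd: "cmod (E (Complex x e)) \<le> a + b + R + \<bar>e\<bar>" if "\<bar>x\<bar> \<le> R" "e \<noteq> 0" for x e
  proof -
    have "cmod (E (Complex x e)) \<le> a + b + cmod (Complex x e)"
      unfolding E_def using E_bound[OF a0 b0, of "Complex x e"] that by simp
    also have "cmod (Complex x e) \<le> \<bar>x\<bar> + \<bar>e\<bar>" using cmod_le[of "Complex x e"] by simp
    finally show ?thesis using that by simp
  qed
  have bound: "\<forall>\<^sub>F e in at_right 0. AE x in lborel. norm (sB e x) \<le> w x"
  proof -
    have "\<forall>\<^sub>F e in at_right (0::real). 0 < e" by (simp add: eventually_at_right_less)
    moreover have "\<forall>\<^sub>F e in at_right (0::real). e < 1"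
      using order_tendstoD(2)[OF tendsto_ident_at[of "0::real" "{0<..}"], of 1] by simp
    ultimately show ?thesis
    proof eventually_elim
      case (elim e)
      show ?case
      proof (intro AE_I2)
        fix x :: real
        show "norm (sB e x) \<le> w x"
        proof (cases "\<bar>x\<bar> > R")
          case True then show ?thesis using R w0 by (simp add: sB_def)
        next
          case False
          have "norm (sB e x) \<le> M * (cmod (E (Complex x e)) + cmod (E (Complex x (-e))))"
            unfolding sB_def norm_mult using M[of x] norm_triangle_ineq4
            by (intro mult_mono) auto
          also have "\<dots> \<le> M * ((a + b + R + 1) + (a + b + R + 1))"
          proof -
            have "cmod (E (Complex x e)) \<le> a + b + R + 1" using E_bd[of x e] False elim by simp
            moreover have "cmod (E (Complex x (-e))) \<le> a + b + R + 1" using E_bd[of x "-e"] False elim by simp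
            ultimately show ?thesis using M0 by (intro mult_left_mono add_mono) auto
          qed
          also have "\<dots> = w x"
          proof -
            have "x \<in> {-R..R}" using False by auto
            then show ?thesis by (simp add: w_def)
          qed
          finally show ?thesis .
        qed
      qed
    qed
  qed
  have lim: "AE x in lborel. ((\<lambda>e. sB e x) \<longlongrightarrow> f x) (at_right 0)"
  proof -
    have "AE x in lborel. x \<notin> {0, a, -a, b, -b}"
      by (intro AE_not_in countable_imp_null_set_lborel) auto
    then show ?thesis
    proof eventually_elim
      case (elim x)
      have xne: "x \<noteq> 0" "x \<noteq> a" "x \<noteq> -a" "x \<noteq> b" "x \<noteq> -b" using elim by auto
      have zp: "((\<lambda>e. Complex x e) \<longlongrightarrow> complex_of_real x) (at_right 0)"
        using tendsto_Complex[OF tendsto_const tendsto_ident_at[of 0 "{0<..}"], of x]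
        by (simp add: Complex_eq)
      have zm: "((\<lambda>e. Complex x (-e)) \<longlongrightarrow> complex_of_real x) (at_right 0)"
        using tendsto_Complex[OF tendsto_const neg_lim, of x]
        by (simp add: Complex_eq)
      have Ep: "((\<lambda>e. E (Complex x e)) \<longlongrightarrow> (Pp a b x - complex_of_real (a*b)) / complex_of_real x) (at_right 0)"
        unfolding E_def Pp_def using xne
        by (intro tendsto_divide tendsto_diff tendsto_mult Q_lim_p tendsto_const zp) auto
      have Em: "((\<lambda>e. E (Complex x (-e))) \<longlongrightarrow> (Pm a b x - complex_of_real (a*b)) / complex_of_real x) (at_right 0)"
        unfolding E_def Pm_def using xne
        by (intro tendsto_divide tendsto_diff tendsto_mult Q_lim_m tendsto_const zm) auto
      have "((\<lambda>e. sB e x) \<longlongrightarrow> complex_of_real (\<phi> x) *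
          ((Pp a b x - complex_of_real (a*b)) / complex_of_real x - (Pm a b x - complex_of_real (a*b)) / complex_of_real x)) (at_right 0)"
        unfolding sB_def by (intro tendsto_mult tendsto_const tendsto_diff Ep Em)
      moreover have "complex_of_real (\<phi> x) *
          ((Pp a b x - complex_of_real (a*b)) / complex_of_real x - (Pm a b x - complex_of_real (a*b)) / complex_of_real x)
          = f x"
      proof -
        have "(Pp a b x - complex_of_real (a*b)) / complex_of_real x - (Pm a b x - complex_of_real (a*b)) / complex_of_real x
            = (Pp a b x - Pm a b x) / complex_of_real x"
          by (simp add: diff_divide_distrib)
        also have "\<dots> = (if a < \<bar>x\<bar> \<and> \<bar>x\<bar> < b then -2 * \<i> * complex_of_real (sqrt ((x^2 - a^2) * (b^2 - x^2)) / \<bar>x\<bar>) else 0)"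
          by (rule jump_val[OF a0 ab elim])
        also have "\<dots> = complex_of_real (nu_density \<beta> c x) * (- (\<i> * pi * \<beta>))"
        proof (cases "a < \<bar>x\<bar> \<and> \<bar>x\<bar> < b")
          case True
          then have "x \<in> supp_S \<beta> c" unfolding supp_S_def a_def[symmetric] b_def[symmetric] by auto
          then show ?thesis using True assms(1) xne
            by (simp add: nu_density_def a_def[symmetric] b_def[symmetric])
        next
          case False
          then have "x \<notin> supp_S \<beta> c" using xne a0 unfolding supp_S_def a_def[symmetric] b_def[symmetric] by auto
          then show ?thesis by (subst if_not_P[OF False]) (simp add: nu_density_def)
        qed
        finally show ?thesis unfolding f_def by simp
      qed
      ultimately show ?case by simp
    qed
  qed
  have DCT: "((\<lambda>e. integral\<^sup>L lborel (sB e)) \<longlongrightarrow> integral\<^sup>L lborel f) (at_right 0)"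
    by (rule DCT_at_right[OF f_meas sB_meas w_int lim bound])
  have P: "((\<lambda>e. integral\<^sup>L lborel (\<lambda>x. \<phi> x * (e / (x^2 + e^2)))) \<longlongrightarrow> pi * \<phi> 0) (at_right 0)"
    by (rule poisson[OF cont M])
  define C where "C = 2 * \<i> * complex_of_real (2/\<beta>) * complex_of_real c"
  have lim_tot: "((\<lambda>e. C * complex_of_real (integral\<^sup>L lborel (\<lambda>x. \<phi> x * (e / (x^2 + e^2))))
       + (- complex_of_real (2/\<beta>)) * integral\<^sup>L lborel (sB e)) \<longlongrightarrow>
       C * complex_of_real (pi * \<phi> 0) + (- complex_of_real (2/\<beta>)) * integral\<^sup>L lborel f) (at_right 0)"
    by (intro tendsto_add tendsto_mult tendsto_const tendsto_of_real P DCT)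
  have ev: "\<forall>\<^sub>F e in at_right 0. C * complex_of_real (integral\<^sup>L lborel (\<lambda>x. \<phi> x * (e / (x^2 + e^2))))
       + (- complex_of_real (2/\<beta>)) * integral\<^sup>L lborel (sB e) =
       integral\<^sup>L lborel (\<lambda>x. complex_of_real (\<phi> x) *
                  (fbc \<beta> c (Complex x e) - fbc \<beta> c (Complex x (-e))))"
  proof -
    have "\<forall>\<^sub>F e in at_right (0::real). 0 < e" by (simp add: eventually_at_right_less)
    then show ?thesis
    proof eventually_elim
      case (elim e)
      have pw: "complex_of_real (\<phi> x) * (fbc \<beta> c (Complex x e) - fbc \<beta> c (Complex x (-e)))
          = C * complex_of_real (\<phi> x * (e / (x^2 + e^2))) + (- complex_of_real (2/\<beta>)) * sB e x" for x
      proof -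
        define k where "k = complex_of_real (2/\<beta>)"
        define \<rho> where "\<rho> = complex_of_real (e / (x^2 + e^2))"
        have u: "fbc \<beta> c (Complex x e) = - k * (complex_of_real c / Complex x e + E (Complex x e))"
          using fbc_split[OF assms(1,2), of "Complex x e"] elim unfolding E_def a_def b_def k_def by simp
        have v: "fbc \<beta> c (Complex x (-e)) = - k * (complex_of_real c / Complex x (-e) + E (Complex x (-e)))"
          using fbc_split[OF assms(1,2), of "Complex x (-e)"] elim unfolding E_def a_def b_def k_def by simp
        have D: "complex_of_real c / Complex x e - complex_of_real c / Complex x (-e)
            = complex_of_real c * (- 2 * \<i> * \<rho>)"
          using inv_diff[of e x] elim unfolding \<rho>_def by (simp add: divide_inverse right_diff_distrib[symmetric] del: of_real_divide)
        have "fbc \<beta> c (Complex x e) - fbc \<beta> c (Complex x (-e)) = 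
           - k * (complex_of_real c / Complex x e - complex_of_real c / Complex x (-e)) - k * (E (Complex x e) - E (Complex x (-e)))"
          unfolding u v by (simp add: algebra_simps)
        also have "\<dots> = - k * (complex_of_real c * (- 2 * \<i> * \<rho>)) - k * (E (Complex x e) - E (Complex x (-e)))"
          unfolding D ..
        finally have uv: "fbc \<beta> c (Complex x e) - fbc \<beta> c (Complex x (-e)) = 
           - k * (complex_of_real c * (- 2 * \<i> * \<rho>)) - k * (E (Complex x e) - E (Complex x (-e)))" .
        have eqp: "complex_of_real (\<phi> x * (e / (x^2 + e^2))) = complex_of_real (\<phi> x) * \<rho>"
          unfolding \<rho>_def by (simp only: of_real_mult)
        show ?thesis unfolding uv sB_def C_def k_def[symmetric] eqp
          by (simp add: algebra_simps)
      qed
      have intA: "integrable lborel (\<lambda>x. \<phi> x * (e / (x^2 + e^2)))"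
      proof (rule Bochner_Integration.integrable_bound[of lborel "\<lambda>x. (M / e * indicator {-R..R} x :: real)"])
        show "integrable lborel (\<lambda>x. M / e * indicator {-R..R} x :: real)"
          by (intro integrable_mult_right integrable_real_indicator) (auto simp: emeasure_lborel_Icc_eq)
        show "(\<lambda>x. \<phi> x * (e / (x^2 + e^2))) \<in> borel_measurable lborel" by measurable
        show "AE x in lborel. norm (\<phi> x * (e / (x^2 + e^2))) \<le> norm (M / e * indicator {-R..R} x :: real)"
        proof (intro AE_I2)
          fix x :: real
          show "norm (\<phi> x * (e / (x^2 + e^2))) \<le> norm (M / e * indicator {-R..R} x :: real)"
          proof (cases "\<bar>x\<bar> > R")
            case True then show ?thesis using R by simp
          next
            case False
            have "e / (x^2 + e^2) \<le> 1 / e" using elim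
              by (simp add: divide_simps power2_eq_square add_nonneg_pos)
            moreover have "0 \<le> e / (x^2 + e^2)" using elim by simp
            ultimately have "\<bar>\<phi> x\<bar> * (e / (x^2 + e^2)) \<le> M * (1 / e)"
              using M[of x] M0 by (intro mult_mono) auto
            moreover have "x \<in> {-R..R}" using False by auto
            ultimately show ?thesis using M0 elim by (simp add: abs_mult)
          qed
        qed
      qed
      have intB: "integrable lborel (sB e)"
      proof (rule Bochner_Integration.integrable_bound[of lborel "\<lambda>x. (2 * M * (a + b + R + e) * indicator {-R..R} x :: real)", OF _ sB_meas])
        show "integrable lborel (\<lambda>x. (2 * M * (a + b + R + e) * indicator {-R..R} x :: real))"
          by (intro integrable_mult_right integrable_real_indicator) (auto simp: emeasure_lborel_Icc_eq)
        show "AE x in lborel. norm (sB e x) \<le> norm (2 * M * (a + b + R + e) * indicator {-R..R} x :: real)"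
        proof (intro AE_I2)
          fix x :: real
          show "norm (sB e x) \<le> norm (2 * M * (a + b + R + e) * indicator {-R..R} x :: real)"
          proof (cases "\<bar>x\<bar> > R")
            case True then show ?thesis using R by (simp add: sB_def)
          next
            case False
            have "norm (sB e x) \<le> M * (cmod (E (Complex x e)) + cmod (E (Complex x (-e))))"
              unfolding sB_def norm_mult using M[of x] norm_triangle_ineq4
              by (intro mult_mono) auto
            also have "\<dots> \<le> M * ((a + b + R + e) + (a + b + R + e))"
            proof -
              have "cmod (E (Complex x e)) \<le> a + b + R + e" using E_bd[of x e] False elim by simp
              moreover have "cmod (E (Complex x (-e))) \<le> a + b + R + e" using E_bd[of x "-e"] False elim by simp
              ultimately show ?thesis using M0 by (intro mult_left_mono add_mono) auto
            qed
            also have "\<dots> = norm (2 * M * (a + b + R + e) * indicator {-R..R} x :: real)"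
            proof -
              have "x \<in> {-R..R}" using False by auto
              then show ?thesis using M0 a0 b0 R0 elim by (simp add: abs_mult)
            qed
            finally show ?thesis .
          qed
        qed
      qed
      have "integral\<^sup>L lborel (\<lambda>x. complex_of_real (\<phi> x) * (fbc \<beta> c (Complex x e) - fbc \<beta> c (Complex x (-e))))
          = integral\<^sup>L lborel (\<lambda>x. C * complex_of_real (\<phi> x * (e / (x^2 + e^2))) + (- complex_of_real (2/\<beta>)) * sB e x)"
        by (simp only: pw)
      also have "\<dots> = C * complex_of_real (integral\<^sup>L lborel (\<lambda>x. \<phi> x * (e / (x^2 + e^2))))
          + (- complex_of_real (2/\<beta>)) * integral\<^sup>L lborel (sB e)"
      proof -
        have i1: "integrable lborel (\<lambda>x. C * complex_of_real (\<phi> x * (e / (x^2 + e^2))))"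
          by (intro integrable_mult_right integrable_of_real intA)
        have i2: "integrable lborel (\<lambda>x. (- complex_of_real (2/\<beta>)) * sB e x)"
          using intB by (intro integrable_mult_right)
        show ?thesis
          unfolding Bochner_Integration.integral_add[OF i1 i2] integral_mult_right_zero integral_complex_of_real ..
      qed
      finally show ?case by simp
    qed
  qed
  have final: "C * complex_of_real (pi * \<phi> 0) + (- complex_of_real (2/\<beta>)) * integral\<^sup>L lborel f
     = 2 * \<i> * pi * complex_of_real (integral\<^sup>L (nu \<beta> c) \<phi>)
              + 2 * \<i> * pi * complex_of_real (2 * c / \<beta>) * complex_of_real (\<phi> 0)"
  proof -
    have "integral\<^sup>L (nu \<beta> c) \<phi> = integral\<^sup>L lborel (\<lambda>x. nu_density \<beta> c x * \<phi> x)"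
      unfolding nu_def using nu_density_measurable[of \<beta> c] nu_density_nonneg[OF assms(1,2)]
      by (subst integral_density) auto
    moreover have "integral\<^sup>L lborel f = complex_of_real (integral\<^sup>L lborel (\<lambda>x. nu_density \<beta> c x * \<phi> x)) * (- (\<i> * pi * \<beta>))"
    proof -
      have "integral\<^sup>L lborel f = complex_of_real (integral\<^sup>L lborel (\<lambda>x. \<phi> x * nu_density \<beta> c x)) * (- (\<i> * pi * \<beta>))"
        unfolding f_def integral_mult_left_zero integral_complex_of_real ..
      moreover have "integral\<^sup>L lborel (\<lambda>x. \<phi> x * nu_density \<beta> c x) = integral\<^sup>L lborel (\<lambda>x. nu_density \<beta> c x * \<phi> x)"
        by (simp add: mult.commute)
      ultimately show ?thesis by simp
    qed
    ultimately show ?thesis unfolding C_def using assms(1)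
      by (simp add: field_simps)
  qed
  show ?thesis
    using tendsto_cong[OF ev] lim_tot unfolding final by simp
qed

end
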